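(* Let $X$ be a finite connected poset and $\theta:B\to B$ a bijection. Then $\theta$ is admissible if and only if $s^+_{\theta,\Gamma}(z)-s^-_{\theta,\Gamma}(z)=t^+_{\theta,\Gamma}(z)-t^-_{\theta,\Gamma}(z)$ holds for every cycle $\Gamma$ in $X$ and every $z\in X$.
   Context: For $x<y$ let $e_{xy}$ denote the pair/basis symbol indexed by $(x,y)$ and $B=\{e_{xy}:x<y\}$. A walk in $X$ is a sequence $u_0,\dots,u_m$ such that for each $i$ one of $u_i,u_{i+1}$ covers the other; it is closed if $u_0=u_m$; a cycle is a closed walk $u_0,\dots,u_m=u_0$ with $m\ge4$ and $u_i\ne u_j$ for all $i\ne j$ other than $\{i,j\}=\{0,m\}$. $X$ is connected if any two elements are joined by a walk. For a closed walk $\Gamma:u_0,\dots,u_m=u_0$ and $z\in X$: $s^+_{\theta,\Gamma}(z)$ is the number of $i$ with $u_i<u_{i+1}$ such that $\theta(e_{zw})=e_{u_iu_{i+1}}$ for some $w>z$; $s^-_{\theta,\Gamma}(z)$ the number of $i$ with $u_i>u_{i+1}$ such that $\theta(e_{zw})=e_{u_{i+1}u_i}$ for some $w>z$; $t^+_{\theta,\Gamma}(z)$ the number of $i$ with $u_i<u_{i+1}$ such that $\theta(e_{wz})=e_{u_iu_{i+1}}$ for some $w<z$; $t^-_{\theta,\Gamma}(z)$ the number of $i$ with $u_i>u_{i+1}$ such that $\theta(e_{wz})=e_{u_{i+1}u_i}$ for some $w<z$. $\theta$ is admissible if $s^+_{\theta,\Gamma}(z)-s^-_{\theta,\Gamma}(z)=t^+_{\theta,\Gamma}(z)-t^-_{\theta,\Gamma}(z)$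 for every closed walk $\Gamma$ and every $z\in X$. *)

theory Defs
  imports Main
begin

text \<open>A finite poset is represented as a finite carrier set X in a type of class order,
  with the induced order.\<close>

definition covers :: "'a::order set \<Rightarrow> 'a \<Rightarrow> 'a \<Rightarrow> bool" where
  "covers X x y \<longleftrightarrow> x \<in> X \<and> y \<in> X \<and> x < y \<and> \<not> (\<exists>z\<in>X. x < z \<and> z < y)"

text \<open>The index set B of pairs (x,y) with x<y in X; the symbol e_xy is the pair (x,y).\<close>
definition pairsB :: "'a::order set \<Rightarrow> ('a \<times> 'a) set" where
  "pairsB X = {(x, y). x \<in> X \<and> y \<in> X \<and> x < y}"

text \<open>A walk u_0,...,u_m is a nonempty list of length m+1.\<close>
definition is_walk :: "'a::order set \<Rightarrow> 'a list \<Rightarrow> bool" where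
  "is_walk X us \<longleftrightarrow> us \<noteq> [] \<and> set us \<subseteq> X \<and>
     (\<forall>i. Suc i < length us \<longrightarrow> covers X (us ! i) (us ! Suc i) \<or> covers X (us ! Suc i) (us ! i))"

definition is_closed_walk :: "'a::order set \<Rightarrow> 'a list \<Rightarrow> bool" where
  "is_closed_walk X us \<longleftrightarrow> is_walk X us \<and> hd us = last us"

definition is_cycle :: "'a::order set \<Rightarrow> 'a list \<Rightarrow> bool" where
  "is_cycle X us \<longleftrightarrow> is_closed_walk X us \<and> length us \<ge> 5 \<and>
     (\<forall>i j. i < length us \<and> j < length us \<and> i \<noteq> j \<and> {i, j} \<noteq> {0, length us - 1}
        \<longrightarrow> us ! i \<noteq> us ! j)"

definition poset_connected :: "'a::order set \<Rightarrow> bool" where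
  "poset_connected X \<longleftrightarrow> (\<forall>x\<in>X. \<forall>y\<in>X. \<exists>us. is_walk X us \<and> hd us = x \<and> last us = y)"

definition s_plus :: "'a::order set \<Rightarrow> ('a \<times> 'a \<Rightarrow> 'a \<times> 'a) \<Rightarrow> 'a list \<Rightarrow> 'a \<Rightarrow> nat" where
  "s_plus X \<theta> us z = card {i. Suc i < length us \<and> us ! i < us ! Suc i \<and>
     (\<exists>w\<in>X. z < w \<and> \<theta> (z, w) = (us ! i, us ! Suc i))}"

definition s_minus :: "'a::order set \<Rightarrow> ('a \<times> 'a \<Rightarrow> 'a \<times> 'a) \<Rightarrow> 'a list \<Rightarrow> 'a \<Rightarrow> nat" where
  "s_minus X \<theta> us z = card {i. Suc i < length us \<and> us ! Suc i < us ! i \<and>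
     (\<exists>w\<in>X. z < w \<and> \<theta> (z, w) = (us ! Suc i, us ! i))}"

definition t_plus :: "'a::order set \<Rightarrow> ('a \<times> 'a \<Rightarrow> 'a \<times> 'a) \<Rightarrow> 'a list \<Rightarrow> 'a \<Rightarrow> nat" where
  "t_plus X \<theta> us z = card {i. Suc i < length us \<and> us ! i < us ! Suc i \<and>
     (\<exists>w\<in>X. w < z \<and> \<theta> (w, z) = (us ! i, us ! Suc i))}"

definition t_minus :: "'a::order set \<Rightarrow> ('a \<times> 'a \<Rightarrow> 'a \<times> 'a) \<Rightarrow> 'a list \<Rightarrow> 'a \<Rightarrow> nat" where
  "t_minus X \<theta> us z = card {i. Suc i < length us \<and> us ! Suc i < us ! i \<and>
     (\<exists>w\<in>X. w < z \<and> \<theta> (w, z) = (us ! Suc i, us ! i))}"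

definition balanced_at :: "'a::order set \<Rightarrow> ('a \<times> 'a \<Rightarrow> 'a \<times> 'a) \<Rightarrow> 'a list \<Rightarrow> 'a \<Rightarrow> bool" where
  "balanced_at X \<theta> us z \<longleftrightarrow>
     int (s_plus X \<theta> us z) - int (s_minus X \<theta> us z) = int (t_plus X \<theta> us z) - int (t_minus X \<theta> us z)"

definition admissible :: "'a::order set \<Rightarrow> ('a \<times> 'a \<Rightarrow> 'a \<times> 'a) \<Rightarrow> bool" where
  "admissible X \<theta> \<longleftrightarrow> (\<forall>us z. is_closed_walk X us \<and> z \<in> X \<longrightarrow> balanced_at X \<theta> us z)"

end

theory Submission
  imports Defs
begin

lemma successively_nth:
  "successively P xs \<longleftrightarrow> (\<forall>i. Suc i < length xs \<longrightarrow> P (xs!i) (xs!Suc i))"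
proof (induction xs)
  case Nil then show ?case by simp
next
  case (Cons x xs)
  show ?case
  proof (cases xs)
    case Nil then show ?thesis by simp
  next
    case (Cons y ys)
    have "(\<forall>i. Suc i < length (x # xs) \<longrightarrow> P ((x # xs) ! i) ((x # xs) ! Suc i)) \<longleftrightarrow>
       P x y \<and> (\<forall>i. Suc i < length xs \<longrightarrow> P (xs ! i) (xs ! Suc i))"
      (is "?L \<longleftrightarrow> ?R")
    proof
      assume L: ?L
      have "P x y" using L[rule_format, of 0] Cons by simp
      moreover have "\<forall>i. Suc i < length xs \<longrightarrow> P (xs ! i) (xs ! Suc i)"
      proof (intro allI impI)
        fix i assume "Suc i < length xs"
        then show "P (xs ! i) (xs ! Suc i)" using L[rule_format, of "Suc i"] by simp
      qed
      ultimately show ?R by blast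
    next
      assume R: ?R
      show ?L
      proof (intro allI impI)
        fix i assume i: "Suc i < length (x # xs)"
        show "P ((x # xs) ! i) ((x # xs) ! Suc i)"
        proof (cases i)
          case 0 then show ?thesis using R Cons by simp
        next
          case (Suc k) then show ?thesis using R i by simp
        qed
      qed
    qed
    then show ?thesis using Cons.IH Cons by simp
  qed
qed

definition adj :: "'a::order set \<Rightarrow> 'a \<Rightarrow> 'a \<Rightarrow> bool" where
  "adj X x y \<longleftrightarrow> covers X x y \<or> covers X y x"

lemma is_walk_succ: "is_walk X us \<longleftrightarrow> us \<noteq> [] \<and> set us \<subseteq> X \<and> successively (adj X) us"
  unfolding is_walk_def adj_def successively_nth by blast

fun wsum :: "('a \<Rightarrow> 'a \<Rightarrow> int) \<Rightarrow> 'a list \<Rightarrow> int" where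
  "wsum g [] = 0" | "wsum g [x] = 0" | "wsum g (x # y # xs) = g x y + wsum g (y # xs)"

lemma wsum_split: "wsum g (xs @ a # ys) = wsum g (xs @ [a]) + wsum g (a # ys)"
  by (induction g xs rule: wsum.induct) auto

lemma no_loop: "\<not> adj X a a" by (auto simp: adj_def covers_def)

lemma no_triangle: "adj X a b \<Longrightarrow> adj X b c \<Longrightarrow> adj X c a \<Longrightarrow> a \<noteq> b \<Longrightarrow> b \<noteq> c \<Longrightarrow> a \<noteq> c \<Longrightarrow> False"
  unfolding adj_def covers_def by (metis order.strict_trans)

lemma decomp:
  assumes "i < j" "j < length us" "us ! i = us ! j"
  shows "us = take i us @ us ! i # take (j - i - 1) (drop (Suc i) us) @ us ! i # drop (Suc j) us"
proof -
  have "drop (Suc i) us = take (j - i - 1) (drop (Suc i) us) @ drop (j - i - 1) (drop (Suc i) us)"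
    by (metis append_take_drop_id)
  moreover have "drop (j - i - 1) (drop (Suc i) us) = drop j us"
    using assms by (simp add: add.commute)
  moreover have "drop j us = us ! j # drop (Suc j) us" using assms Cons_nth_drop_Suc by metis
  ultimately have h1: "drop (Suc i) us = take (j - i - 1) (drop (Suc i) us) @ us ! i # drop (Suc j) us"
    using assms by simp
  have h2: "us = take i us @ us ! i # drop (Suc i) us"
    by (rule id_take_nth_drop) (use assms in simp)
  show ?thesis by (subst h1[symmetric]) (rule h2)
qed

lemma pne: "(b::'a) \<notin> A \<Longrightarrow> A \<noteq> {a, b}" by auto

lemma closed_walk_zero:
  fixes g :: "'a::order \<Rightarrow> 'a \<Rightarrow> int"
  assumes anti: "\<And>u v. g u v = - g v u"
  and cyc: "\<And>us. is_cycle X us \<Longrightarrow> wsum g us = 0"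
  shows "is_closed_walk X us \<Longrightarrow> wsum g us = 0"
proof (induction "length us" arbitrary: us rule: less_induct)
  case less
  have W: "us \<noteq> []" "set us \<subseteq> X" "successively (adj X) us" "hd us = last us"
    using less.prems by (auto simp: is_closed_walk_def is_walk_succ)
  show ?case
  proof (cases "\<exists>i j. i < j \<and> j < length us \<and> \<not> (i = 0 \<and> j = length us - 1) \<and> us ! i = us ! j")
    case True
    then obtain i j where ij: "i < j" "j < length us" "\<not> (i = 0 \<and> j = length us - 1)" "us ! i = us ! j"
      by blast
    define xs where "xs = take i us"
    define ys where "ys = take (j - i - 1) (drop (Suc i) us)"
    define zs where "zs = drop (Suc j) us"
    define a where "a = us ! i"
    have U: "us = xs @ a # ys @ a # zs" unfolding xs_def ys_def zs_def a_def by (rule decomp[OF ij(1,2,4)])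
    have ne: "xs \<noteq> [] \<or> zs \<noteq> []"
    proof (rule ccontr)
      assume "\<not> (xs \<noteq> [] \<or> zs \<noteq> [])"
      then have e: "take i us = []" "drop (Suc j) us = []" unfolding xs_def zs_def by auto
      have "i = 0" using e(1) W(1) by simp
      moreover have "j = length us - 1" using e(2) ij(2) by simp
      ultimately show False using ij(3) by blast
    qed
    have S: "successively (adj X) (xs @ a # ys @ a # zs)" using W(3) by (simp only: U)
    have eq: "xs @ a # ys @ a # zs = xs @ ((a # ys @ [a]) @ zs)" by simp
    have S2: "successively (adj X) (xs @ ((a # ys @ [a]) @ zs))" using S by (simp only: eq)
    have S3: "successively (adj X) xs" "successively (adj X) ((a # ys @ [a]) @ zs)"
      "xs \<noteq> [] \<Longrightarrow> adj X (last xs) a"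
      using S2 successively_append_iff[of "adj X" xs "(a # ys @ [a]) @ zs"] by auto
    have S4: "successively (adj X) (a # ys @ [a])" "successively (adj X) zs"
      "zs \<noteq> [] \<Longrightarrow> adj X a (hd zs)"
      using S3(2) successively_append_iff[of "adj X" "a # ys @ [a]" zs] by auto
    have SB: "successively (adj X) (xs @ a # zs)"
    proof -
      have "successively (adj X) (a # zs)" using S4(2,3) by (cases zs) auto
      then show ?thesis using S3(1,3) successively_append_iff[of "adj X" xs "a # zs"] by auto
    qed
    have setA: "set (a # ys @ [a]) \<subseteq> X" using W(2) U by auto
    have setB: "set (xs @ a # zs) \<subseteq> X" using W(2) U by auto
    have cA: "is_closed_walk X (a # ys @ [a])"
      unfolding is_closed_walk_def is_walk_succ using S4(1) setA by simp
    have hB: "hd (xs @ a # zs) = last (xs @ a # zs)"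
    proof -
      have "hd (xs @ a # zs) = hd us" using U by (cases xs) auto
      moreover have "last (xs @ a # zs) = last us" using U by (cases zs) auto
      ultimately show ?thesis using W(4) by simp
    qed
    have cB: "is_closed_walk X (xs @ a # zs)"
      unfolding is_closed_walk_def is_walk_succ using SB setB hB by simp
    have lA: "length (a # ys @ [a]) < length us" using U ne by auto
    have lB: "length (xs @ a # zs) < length us" using U by auto
    have "wsum g us = wsum g (xs @ [a]) + (wsum g (a # ys @ [a]) + wsum g (a # zs))"
      using U wsum_split[of g xs a "ys @ a # zs"] wsum_split[of g "a # ys" a zs] by simp
    also have "\<dots> = wsum g (xs @ a # zs)"
      using less.hyps[OF lA cA] wsum_split[of g xs a zs] by simp
    also have "\<dots> = 0" using less.hyps[OF lB cB] .
    finally show ?thesis .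
  next
    case False
    have D: "\<And>i j. i < length us \<Longrightarrow> j < length us \<Longrightarrow> i \<noteq> j \<Longrightarrow> {i, j} \<noteq> {0, length us - 1} \<Longrightarrow> us ! i \<noteq> us ! j"
    proof -
      fix i j assume a: "i < length us" "j < length us" "i \<noteq> j" "{i, j} \<noteq> {0, length us - 1}"
      show "us ! i \<noteq> us ! j"
      proof (cases "i < j")
        case True
        have "\<not> (i = 0 \<and> j = length us - 1)" using a(4) by auto
        then show ?thesis using False True a(2) by blast
      next
        case c: False
        then have "j < i" using a(3) by simp
        moreover have "\<not> (j = 0 \<and> i = length us - 1)" using a(4) by auto
        ultimately have "us ! j \<noteq> us ! i" using False a(1) by blast
        then show ?thesis by simp
      qed
    qed
    consider "length us = 1" | "length us = 2" | "length us = 3" | "length us = 4" | "length us \<ge> 5"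
    proof -
      have "length us \<ge> 1" using W(1) by (cases us) auto
      then have "length us = 1 \<or> length us = 2 \<or> length us = 3 \<or> length us = 4 \<or> length us \<ge> 5" by linarith
      then show ?thesis using that by blast
    qed
    then show ?thesis
    proof cases
      case 1 then show ?thesis by (cases us) auto
    next
      case 2
      then obtain a b where u: "us = [a, b]" by (auto simp: length_Suc_conv eval_nat_numeral)
      then have "a = b" using W(4) by simp
      moreover have "adj X a b" using W(3) u by simp
      ultimately have False using no_loop[of X a] by simp
      then show ?thesis ..
    next
      case 3
      then obtain a b c where u: "us = [a, b, c]" by (auto simp: length_Suc_conv eval_nat_numeral)
      then have "c = a" using W(4) by simp
      moreover have "g a b + g b a = 0" using anti[of a b] by linarith
      ultimately show ?thesis using u by simp
    next
      case 4
      then obtain a b c d where u: "us = [a, b, c, d]" by (auto simp: length_Suc_conv eval_nat_numeral)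
      have l: "length us - 1 = 3" using 4 by simp
      have n1: "{0::nat, 1} \<noteq> {0, 3}" by (rule pne) simp
      have n2: "{1::nat, 2} \<noteq> {0, 3}" by (rule pne) simp
      have n3: "{0::nat, 2} \<noteq> {0, 3}" by (rule pne) simp
      have "us ! 0 \<noteq> us ! 1" using D[of 0 1] 4 l n1 by simp
      then have "a \<noteq> b" using u by simp
      moreover have "us ! 1 \<noteq> us ! 2" using D[of 1 2] 4 l n2 by simp
      then have "b \<noteq> c" using u by simp
      moreover have "us ! 0 \<noteq> us ! 2" using D[of 0 2] 4 l n3 by simp
      then have "a \<noteq> c" using u by simp
      moreover have "d = a" using W(4) u by simp
      moreover have "adj X a b" "adj X b c" "adj X c d" using W(3) u by simp_all
      ultimately have False using no_triangle[of X a b c] by blast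
      then show ?thesis ..
    next
      case 5
      have "(\<forall>i j. i < length us \<and> j < length us \<and> i \<noteq> j \<and> {i, j} \<noteq> {0, length us - 1}
        \<longrightarrow> us ! i \<noteq> us ! j)" using D by (intro allI impI) (elim conjE)
      then have "is_cycle X us" using less.prems 5 unfolding is_cycle_def by (intro conjI)
      then show ?thesis by (rule cyc)
    qed
  qed
qed

lemma wsum_eq_sum: "wsum g us = (\<Sum>i<length us - 1. g (us ! i) (us ! Suc i))"
proof (induction g us rule: wsum.induct)
  case (3 g x y xs)
  have "(\<Sum>i<length (x # y # xs) - 1. g ((x # y # xs) ! i) ((x # y # xs) ! Suc i))
      = (\<Sum>i<Suc (length (y # xs) - 1). g ((x # y # xs) ! i) ((x # y # xs) ! Suc i))" by simp
  also have "\<dots> = g x y + (\<Sum>i<length (y # xs) - 1. g ((y # xs) ! i) ((y # xs) ! Suc i))"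
    by (subst sum.lessThan_Suc_shift) simp
  finally show ?case using 3 by simp
qed auto

lemma card_sum: "int (card {i. Suc i < n \<and> P i}) = (\<Sum>i<n - 1. of_bool (P i))"
proof -
  have "{i. Suc i < n \<and> P i} = {..<n - 1} \<inter> {i. P i}" by auto
  then show ?thesis by simp
qed

definition hh :: "'a::order set \<Rightarrow> ('a \<times> 'a \<Rightarrow> 'a \<times> 'a) \<Rightarrow> 'a \<Rightarrow> 'a \<Rightarrow> 'a \<Rightarrow> int" where
  "hh X \<theta> z u v = of_bool (u < v \<and> (\<exists>w\<in>X. z < w \<and> \<theta> (z, w) = (u, v)))
     - of_bool (u < v \<and> (\<exists>w\<in>X. w < z \<and> \<theta> (w, z) = (u, v)))"

definition gg :: "'a::order set \<Rightarrow> ('a \<times> 'a \<Rightarrow> 'a \<times> 'a) \<Rightarrow> 'a \<Rightarrow> 'a \<Rightarrow> 'a \<Rightarrow> int" where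
  "gg X \<theta> z u v = hh X \<theta> z u v - hh X \<theta> z v u"

lemma balanced_wsum: "balanced_at X \<theta> us z \<longleftrightarrow> wsum (gg X \<theta> z) us = 0"
proof -
  let ?n = "length us"
  have sp: "int (s_plus X \<theta> us z) = (\<Sum>i<?n - 1. of_bool (us ! i < us ! Suc i \<and>
     (\<exists>w\<in>X. z < w \<and> \<theta> (z, w) = (us ! i, us ! Suc i))))"
    unfolding s_plus_def by (rule card_sum)
  have sm: "int (s_minus X \<theta> us z) = (\<Sum>i<?n - 1. of_bool (us ! Suc i < us ! i \<and>
     (\<exists>w\<in>X. z < w \<and> \<theta> (z, w) = (us ! Suc i, us ! i))))"
    unfolding s_minus_def by (rule card_sum)
  have tp: "int (t_plus X \<theta> us z) = (\<Sum>i<?n - 1. of_bool (us ! i < us ! Suc i \<and>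
     (\<exists>w\<in>X. w < z \<and> \<theta> (w, z) = (us ! i, us ! Suc i))))"
    unfolding t_plus_def by (rule card_sum)
  have tm: "int (t_minus X \<theta> us z) = (\<Sum>i<?n - 1. of_bool (us ! Suc i < us ! i \<and>
     (\<exists>w\<in>X. w < z \<and> \<theta> (w, z) = (us ! Suc i, us ! i))))"
    unfolding t_minus_def by (rule card_sum)
  have "wsum (gg X \<theta> z) us = (\<Sum>i<?n - 1. gg X \<theta> z (us ! i) (us ! Suc i))"
    by (rule wsum_eq_sum)
  also have "\<dots> = (int (s_plus X \<theta> us z) - int (t_plus X \<theta> us z))
      - (int (s_minus X \<theta> us z) - int (t_minus X \<theta> us z))"
    unfolding sp sm tp tm gg_def hh_def by (simp add: sum_subtractf)
  finally show ?thesis unfolding balanced_at_def by linarith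
qed

theorem lemma5p13:
  fixes X :: "'a::order set" and \<theta> :: "'a \<times> 'a \<Rightarrow> 'a \<times> 'a"
  assumes "finite X" and "poset_connected X" and "bij_betw \<theta> (pairsB X) (pairsB X)"
  shows "admissible X \<theta> \<longleftrightarrow>
    (\<forall>us z. is_cycle X us \<and> z \<in> X \<longrightarrow> balanced_at X \<theta> us z)"
proof
  assume "admissible X \<theta>"
  then show "\<forall>us z. is_cycle X us \<and> z \<in> X \<longrightarrow> balanced_at X \<theta> us z"
    unfolding admissible_def is_cycle_def by blast
next
  assume C: "\<forall>us z. is_cycle X us \<and> z \<in> X \<longrightarrow> balanced_at X \<theta> us z"
  show "admissible X \<theta>"
    unfolding admissible_def
  proof (intro allI impI)
    fix us z assume a: "is_closed_walk X us \<and> z \<in> X"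
    have "wsum (gg X \<theta> z) us = 0"
    proof (rule closed_walk_zero[of "gg X \<theta> z" X us])
      show "\<And>u v. gg X \<theta> z u v = - gg X \<theta> z v u" unfolding gg_def by simp
      show "\<And>vs. is_cycle X vs \<Longrightarrow> wsum (gg X \<theta> z) vs = 0"
        using C a balanced_wsum by blast
      show "is_closed_walk X us" using a by simp
    qed
    then show "balanced_at X \<theta> us z" using balanced_wsum by blast
  qed
qed

end
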